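(* Let $\mathcal{A}\subset\mathbb{R}^n$ be a nonempty compact set, $\Xi\subseteq\mathbb{R}^n$, $V:\mathbb{R}^n\to\mathbb{R}_+$ and $\Psi:\mathbb{R}^n\rightrightarrows\mathbb{R}^n$, and assume one of the following two settings holds: (i) $\Xi$ is nonempty, closed and convex, $\mathcal{A}$ is convex, and $V(y)=\tfrac12\|y-\mathbf{P}_{\mathcal{A}}(y)\|^2$; (ii) $\Xi=\mathbb{R}^n$ and $V$ is continuously differentiable with locally Lipschitz gradient, positive definite and radially unbounded with respect to $\mathcal{A}$. Assume $\Psi$ is SPSP with respect to $V$ on $\Xi$, and that for every $\sigma>0$ there exists $B>0$ such that $\|s\|\le B$ for all $y\in\Xi\cap\bar B_\sigma(\mathcal{A})$ and all $s\in\Psi(y)$. Then $\mathcal{A}$ is SPAS for the iterative method $y^+=\mathbf{P}_\Xi[y-\alpha s]$, $s\in\Psi(y)$, with parameter $\alpha>0$.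
   Context: $\|\cdot\|$ is Euclidean; $\mathbf{P}_S$ is the orthogonal projection onto a nonempty closed convex set $S$. For compact $S$ and $r>0$: $\bar B_r(S)=\{x:\|x-\mathbf{P}_S(x)\|\le r\}$, $B_r(S)=\{x:\|x-\mathbf{P}_S(x)\|<r\}$ (distance to $S$). A function $V$ is positive definite w.r.t. a closed set $S$ if $V=0$ on $S$ and $V>0$ off $S$; it is radially unbounded w.r.t. $S$ (on a set $\Xi$) if for every $B\in\mathbb{R}$ there is $r>0$ with $V(x)>B$ for all $x$ (in $\Xi$) outside $\bar B_r(S)$. SPSP: Let $V:\mathbb{R}^n\to\mathbb{R}_+$ be differentiable, positive definite and radially unbounded w.r.t. compact $\mathcal{A}$, and let $\Xi$ strictly contain $\mathcal{A}$ (every point of $\mathcal{A}$ has an open ball around it contained in $\Xi$). $\Psi$ is semiglobally, practically, strictly pseudogradient (SPSP) w.r.t. $V$ on $\Xi$ if there exist $\epsilon\ge0$, $b\ge0$ such that $\nabla V(y)^Ts\ge -b$ for all $y\in\Xi\cap\bar B_\epsilon(\mathcal{A})$, $s\in\Psi(y)$, and for every $\sigma>\epsilon$ there is a continuous $\phi_{\sigma,\epsilon}:\mathbb{R}^n\to\mathbb{R}$, positive on $\Xi\cap(\bar B_\sigma(\mathcal{A})\setminus B_\epsilon(\mathcal{A}))$ and radially unbounded w.r.t. $\mathcal{A}$ on $\Xi$, with $\nabla V(y)^Ts\ge\phi_{\sigma,\epsilon}(y)$ for all $y\in\Xi\cap(\bar B_\sigma(\mathcal{A})\setminus B_\epsilon(\mathcal{A}))$,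 $s\in\Psi(y)$. SPAS (for the iteration with parameter $\alpha$; statements below concern every sequence $(y(t))_{t\in\mathbb{N}}$ with $y(0)\in\Xi$, $y(t+1)=\mathbf{P}_\Xi[y(t)-\alpha s(t)]$, $s(t)\in\Psi(y(t))$): $\mathcal{A}$ is practically stable if for some $\check\rho_s>0$ and every $\rho_s>\check\rho_s$ there exist $\delta>0$ and a nonempty set $P_s\subset(0,\infty)$ such that whenever $\alpha\in P_s$ and $y(0)\in\bar B_\delta(\mathcal{A})\cap\Xi$, $y(t)\in\bar B_{\rho_s}(\mathcal{A})\cap\Xi$ for all $t$. A compact $S$ is uniformly attractive on compact $\Omega$ if for every $\varepsilon>0$ with $\bar B_\varepsilon(S)\cap\Xi\subset\Omega\cap\Xi$ there is $T\in\mathbb{N}$ such that $y(t)\in\bar B_\varepsilon(S)$ whenever $y(0)\in\Omega$ and $t\ge T$. $\mathcal{A}$ is semiglobally practically attractive if for some $\check\rho_a>0$ and all $\sigma>\rho_a>\check\rho_a$ there is a nonempty $P_a\subset(0,\infty)$ such that whenever $\alpha\in P_a$, $\bar B_{\rho_a}(\mathcal{A})$ is uniformly attractive on $\bar B_\sigma(\mathcal{A})$. $\mathcal{A}$ is SPAS (semiglobally practically asymptotically stable) if it is practically stable and semiglobally practically attractive. *)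

theory Defs
  imports "HOL-Analysis.Analysis"
begin

definition cballS :: "real \<Rightarrow> 'a::euclidean_space set \<Rightarrow> 'a set" where
  "cballS r S = {x. infdist x S \<le> r}"

definition ballS :: "real \<Rightarrow> 'a::euclidean_space set \<Rightarrow> 'a set" where
  "ballS r S = {x. infdist x S < r}"

definition pos_def_wrt :: "('a::euclidean_space \<Rightarrow> real) \<Rightarrow> 'a set \<Rightarrow> bool" where
  "pos_def_wrt V S \<longleftrightarrow> (\<forall>x\<in>S. V x = 0) \<and> (\<forall>x. x \<notin> S \<longrightarrow> V x > 0)"

definition rad_unb_on :: "('a::euclidean_space \<Rightarrow> real) \<Rightarrow> 'a set \<Rightarrow> 'a set \<Rightarrow> bool" where
  "rad_unb_on V S Xi \<longleftrightarrow> (\<forall>B. \<exists>r>0. \<forall>x\<in>Xi. x \<notin> cballS r S \<longrightarrow> V x > B)"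

definition strictly_contains :: "'a::euclidean_space set \<Rightarrow> 'a set \<Rightarrow> bool" where
  "strictly_contains Xi A \<longleftrightarrow> (\<forall>a\<in>A. \<exists>e>0. ball a e \<subseteq> Xi)"

definition dV :: "('a::euclidean_space \<Rightarrow> real) \<Rightarrow> 'a \<Rightarrow> 'a \<Rightarrow> real" where
  "dV V y s = frechet_derivative V (at y) s"

definition SPSP :: "('a::euclidean_space \<Rightarrow> 'a set) \<Rightarrow> ('a \<Rightarrow> real) \<Rightarrow> 'a set \<Rightarrow> 'a set \<Rightarrow> bool" where
  "SPSP Psi V A Xi \<longleftrightarrow>
     (\<forall>y. V differentiable (at y)) \<and> (\<forall>y. V y \<ge> 0) \<and> pos_def_wrt V A \<and> rad_unb_on V A UNIV \<and>
     compact A \<and> strictly_contains Xi A \<and>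
     (\<exists>\<epsilon>\<ge>0. \<exists>b\<ge>0.
        (\<forall>y\<in>Xi \<inter> cballS \<epsilon> A. \<forall>s\<in>Psi y. dV V y s \<ge> - b) \<and>
        (\<forall>\<sigma>>\<epsilon>. \<exists>\<phi>::'a \<Rightarrow> real. continuous_on UNIV \<phi> \<and>
            (\<forall>y\<in>Xi \<inter> (cballS \<sigma> A - ballS \<epsilon> A). \<phi> y > 0) \<and>
            rad_unb_on \<phi> A Xi \<and>
            (\<forall>y\<in>Xi \<inter> (cballS \<sigma> A - ballS \<epsilon> A). \<forall>s\<in>Psi y. dV V y s \<ge> \<phi> y)))"

definition is_traj :: "'a::euclidean_space set \<Rightarrow> ('a \<Rightarrow> 'a set) \<Rightarrow> real \<Rightarrow> (nat \<Rightarrow> 'a) \<Rightarrow> bool" where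
  "is_traj Xi Psi \<alpha> y \<longleftrightarrow> y 0 \<in> Xi \<and>
     (\<exists>s. \<forall>t. s t \<in> Psi (y t) \<and> y (Suc t) = closest_point Xi (y t - \<alpha> *\<^sub>R s t))"

definition practically_stable :: "'a::euclidean_space set \<Rightarrow> ('a \<Rightarrow> 'a set) \<Rightarrow> 'a set \<Rightarrow> bool" where
  "practically_stable Xi Psi A \<longleftrightarrow>
     (\<exists>\<rho>c>0. \<forall>\<rho>s>\<rho>c. \<exists>\<delta>>0. \<exists>Ps. Ps \<noteq> {} \<and> Ps \<subseteq> {0<..} \<and>
        (\<forall>\<alpha>\<in>Ps. \<forall>y. is_traj Xi Psi \<alpha> y \<and> y 0 \<in> cballS \<delta> A \<inter> Xi \<longrightarrow>
            (\<forall>t. y t \<in> cballS \<rho>s A \<inter> Xi)))"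

definition unif_attractive :: "'a::euclidean_space set \<Rightarrow> ('a \<Rightarrow> 'a set) \<Rightarrow> real \<Rightarrow> 'a set \<Rightarrow> 'a set \<Rightarrow> bool" where
  "unif_attractive Xi Psi \<alpha> S \<Omega> \<longleftrightarrow>
     (\<forall>\<epsilon>>0. cballS \<epsilon> S \<inter> Xi \<subseteq> \<Omega> \<inter> Xi \<longrightarrow>
        (\<exists>T::nat. \<forall>y. is_traj Xi Psi \<alpha> y \<and> y 0 \<in> \<Omega> \<longrightarrow> (\<forall>t\<ge>T. y t \<in> cballS \<epsilon> S)))"

definition semiglobally_practically_attractive :: "'a::euclidean_space set \<Rightarrow> ('a \<Rightarrow> 'a set) \<Rightarrow> 'a set \<Rightarrow> bool" where
  "semiglobally_practically_attractive Xi Psi A \<longleftrightarrow>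
     (\<exists>\<rho>c>0. \<forall>\<sigma> \<rho>a. \<sigma> > \<rho>a \<and> \<rho>a > \<rho>c \<longrightarrow>
        (\<exists>Pa. Pa \<noteq> {} \<and> Pa \<subseteq> {0<..} \<and>
           (\<forall>\<alpha>\<in>Pa. unif_attractive Xi Psi \<alpha> (cballS \<rho>a A) (cballS \<sigma> A))))"

definition SPAS :: "'a::euclidean_space set \<Rightarrow> ('a \<Rightarrow> 'a set) \<Rightarrow> 'a set \<Rightarrow> bool" where
  "SPAS Xi Psi A \<longleftrightarrow> practically_stable Xi Psi A \<and> semiglobally_practically_attractive Xi Psi A"

end

theory Submission
  imports Defs
begin

lemma cballS_compact:
  fixes A :: "'a::euclidean_space set"
  assumes "A \<noteq> {}" "compact A" "r > 0"
  shows "compact (cballS r A)"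
  using compact_infdist_le[OF assms] unfolding cballS_def .

lemma cballS_mono: "r \<le> r' \<Longrightarrow> cballS r A \<subseteq> cballS r' A"
  unfolding cballS_def by auto

lemma sub_cballS: "r \<ge> 0 \<Longrightarrow> A \<subseteq> cballS r A"
  unfolding cballS_def by auto

lemma step_lemma:
  fixes A Xi :: "'a::euclidean_space set" and V :: "'a \<Rightarrow> real" and Psi :: "'a \<Rightarrow> 'a set"
  assumes A_ne: "A \<noteq> {}" and A_cpt: "compact A" and Xi_cl: "closed Xi"
    and eps: "\<epsilon> \<ge> 0" and b: "\<forall>y\<in>Xi \<inter> cballS \<epsilon> A. \<forall>s\<in>Psi y. dV V y s \<ge> - b" and b0: "b \<ge> 0"
    and phi: "\<forall>\<sigma>>\<epsilon>. \<exists>\<phi>::'a \<Rightarrow> real. continuous_on UNIV \<phi> \<and>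
            (\<forall>y\<in>Xi \<inter> (cballS \<sigma> A - ballS \<epsilon> A). \<phi> y > 0) \<and>
            (\<forall>y\<in>Xi \<inter> (cballS \<sigma> A - ballS \<epsilon> A). \<forall>s\<in>Psi y. dV V y s \<ge> \<phi> y)"
    and M: "\<forall>y\<in>cballS \<epsilon> A. V y \<le> M"
    and rad: "rad_unb_on V A UNIV"
    and bdd: "\<forall>\<sigma>>0. \<exists>B>0. \<forall>y\<in>Xi \<inter> cballS \<sigma> A. \<forall>s\<in>Psi y. norm s \<le> B"
    and G4: "\<forall>R \<theta>. \<theta> > 0 \<longrightarrow> (\<exists>\<eta>>0. \<forall>y\<in>Xi \<inter> cballS R A. \<forall>\<alpha> s. 0 < \<alpha> \<longrightarrow> \<alpha> * norm s \<le> \<eta> \<longrightarrow>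
              V (closest_point Xi (y - \<alpha> *\<^sub>R s)) \<le> V y - \<alpha> * dV V y s + \<theta> * (\<alpha> * norm s))"
  shows "\<exists>\<alpha>0>0. \<exists>\<kappa>>0. \<forall>\<alpha> y s. 0 < \<alpha> \<longrightarrow> \<alpha> \<le> \<alpha>0 \<longrightarrow> y \<in> Xi \<longrightarrow> s \<in> Psi y \<longrightarrow> V y \<le> L \<longrightarrow>
           V (closest_point Xi (y - \<alpha> *\<^sub>R s)) \<le> max (M + 1/2) (V y - \<alpha> * \<kappa>)"
proof -
  obtain r where r: "r > 0" "\<forall>x. x \<notin> cballS r A \<longrightarrow> V x > L"
    using rad unfolding rad_unb_on_def by blast
  define R where "R = max r (\<epsilon> + 1)"
  have R: "R > \<epsilon>" "R > 0" "r \<le> R" using eps r unfolding R_def by auto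
  have inR: "y \<in> cballS R A" if "V y \<le> L" for y
    using r(2) that cballS_mono[OF R(3), of A] by force
  obtain B where B: "B > 0" "\<forall>y\<in>Xi \<inter> cballS R A. \<forall>s\<in>Psi y. norm s \<le> B"
    using bdd R by blast
  obtain \<phi> :: "'a \<Rightarrow> real" where \<phi>: "continuous_on UNIV \<phi>"
      "\<forall>y\<in>Xi \<inter> (cballS R A - ballS \<epsilon> A). \<phi> y > 0"
      "\<forall>y\<in>Xi \<inter> (cballS R A - ballS \<epsilon> A). \<forall>s\<in>Psi y. dV V y s \<ge> \<phi> y"
    using phi R by blast
  define K where "K = Xi \<inter> (cballS R A - ballS \<epsilon> A)"
  have "K = Xi \<inter> cballS R A \<inter> {x. \<epsilon> \<le> infdist x A}"
    unfolding K_def ballS_def by auto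
  moreover have "closed {x. \<epsilon> \<le> infdist x A}"
    by (intro closed_Collect_le continuous_intros)
  ultimately have Kc: "compact K"
    using cballS_compact[OF A_ne A_cpt R(2)] Xi_cl
    by (metis Int_commute closed_Int_compact compact_Int_closed)
  obtain m where m: "m > 0" "\<forall>y\<in>K. \<phi> y \<ge> m"
  proof (cases "K = {}")
    case True then show ?thesis using that[of 1] by auto
  next
    case False
    then obtain x where "x \<in> K" "\<forall>y\<in>K. \<phi> x \<le> \<phi> y"
      using continuous_attains_inf[OF Kc False continuous_on_subset[OF \<phi>(1)]] by auto
    moreover have "\<phi> x > 0" using \<phi>(2) \<open>x \<in> K\<close> unfolding K_def by blast
    ultimately show ?thesis using \<open>\<forall>y\<in>K. \<phi> x \<le> \<phi> y\<close> by (intro that[of "\<phi> x"]) auto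
  qed
  define \<theta> where "\<theta> = m / (2 * B)"
  have th: "\<theta> > 0" "\<theta> * B = m / 2" using m B unfolding \<theta>_def by auto
  obtain \<eta> where eta: "\<eta> > 0" "\<forall>y\<in>Xi \<inter> cballS R A. \<forall>\<alpha> s. 0 < \<alpha> \<longrightarrow> \<alpha> * norm s \<le> \<eta> \<longrightarrow>
              V (closest_point Xi (y - \<alpha> *\<^sub>R s)) \<le> V y - \<alpha> * dV V y s + \<theta> * (\<alpha> * norm s)"
    using G4 th(1) by blast
  define \<alpha>0 where "\<alpha>0 = min (\<eta> / B) (1 / (2 * b + m + 1))"
  have a0: "\<alpha>0 > 0" using eta B m b0 unfolding \<alpha>0_def by auto
  have m2: "m/2 > 0" using m by auto
  have "\<forall>\<alpha> y s. 0 < \<alpha> \<longrightarrow> \<alpha> \<le> \<alpha>0 \<longrightarrow> y \<in> Xi \<longrightarrow> s \<in> Psi y \<longrightarrow> V y \<le> L \<longrightarrow>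
           V (closest_point Xi (y - \<alpha> *\<^sub>R s)) \<le> max (M + 1/2) (V y - \<alpha> * (m/2))"
  proof (intro allI impI)
    fix \<alpha> y s assume a: "0 < \<alpha>" "\<alpha> \<le> \<alpha>0" and y: "y \<in> Xi" and s: "s \<in> Psi y" and VL: "V y \<le> L"
    have yR: "y \<in> Xi \<inter> cballS R A" using inR[OF VL] y by auto
    have sB: "norm s \<le> B" using B(2) yR s by auto
    have "\<alpha> \<le> \<eta> / B" using a unfolding \<alpha>0_def by auto
    hence "\<alpha> * B \<le> \<eta>" using B by (simp add: field_simps)
    hence "\<alpha> * norm s \<le> \<eta>" using sB a by (smt (verit) mult_left_mono)
    hence step: "V (closest_point Xi (y - \<alpha> *\<^sub>R s)) \<le> V y - \<alpha> * dV V y s + \<theta> * (\<alpha> * norm s)"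
      using eta(2) yR a by blast
    have "\<theta> * (\<alpha> * norm s) \<le> \<theta> * (\<alpha> * B)"
      using th a sB by (intro mult_left_mono) auto
    also have "\<dots> = \<alpha> * (m/2)" using th by (simp add: algebra_simps)
    finally have err: "\<theta> * (\<alpha> * norm s) \<le> \<alpha> * (m/2)" .
    have a2: "\<alpha> \<le> 1 / (2 * b + m + 1)" using a unfolding \<alpha>0_def by auto
    hence a3: "\<alpha> * (2 * b + m + 1) \<le> 1" using b0 m by (simp add: field_simps)
    show "V (closest_point Xi (y - \<alpha> *\<^sub>R s)) \<le> max (M + 1/2) (V y - \<alpha> * (m/2))"
    proof (cases "infdist y A \<le> \<epsilon>")
      case True
      hence "y \<in> Xi \<inter> cballS \<epsilon> A" using y unfolding cballS_def by auto
      hence "dV V y s \<ge> -b" "V y \<le> M" using b s M by auto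
      moreover have "\<alpha> * (-b) \<le> \<alpha> * dV V y s" using a calculation(1) by (intro mult_left_mono) auto
      ultimately have "V (closest_point Xi (y - \<alpha> *\<^sub>R s)) \<le> M + \<alpha> * b + \<alpha> * (m/2)"
        using step err by linarith
      also have "\<dots> \<le> M + 1/2" proof -
        have "\<alpha> * (2 * b + m + 1) = 2 * (\<alpha> * b) + \<alpha> * m + \<alpha>" by (simp add: algebra_simps)
        thus ?thesis using a3 a by linarith
      qed
      finally show ?thesis by simp
    next
      case False
      hence "y \<in> K" using yR unfolding K_def ballS_def by auto
      hence "dV V y s \<ge> m" using \<phi>(3) m(2) s unfolding K_def by force
      moreover have "\<alpha> * m \<le> \<alpha> * dV V y s" using a calculation(1) by (intro mult_left_mono) auto
      ultimately have "V (closest_point Xi (y - \<alpha> *\<^sub>R s)) \<le> V y - \<alpha> * m + \<alpha> * (m/2)"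
        using step err by linarith
      thus ?thesis by simp
    qed
  qed
  then show ?thesis using a0 m2 by blast
qed

lemma traj_lemma:
  fixes Xi :: "'a::euclidean_space set"
  assumes traj: "is_traj Xi Psi \<alpha> y"
    and stp: "\<forall>y s. y \<in> Xi \<longrightarrow> s \<in> Psi y \<longrightarrow> V y \<le> L \<longrightarrow>
           V (closest_point Xi (y - \<alpha> *\<^sub>R s)) \<le> max c (V y - \<alpha> * \<kappa>)"
    and inXi: "\<forall>z. closest_point Xi z \<in> Xi" and y0: "V (y 0) \<le> L" and cL: "c \<le> L"
    and a: "\<alpha> > 0" and k: "\<kappa> > 0"
  shows "y t \<in> Xi \<and> V (y t) \<le> max c (V (y 0) - real t * \<alpha> * \<kappa>)"
proof (induction t)
  case 0
  then show ?case using traj unfolding is_traj_def by auto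
next
  case (Suc t)
  obtain s where s: "\<forall>t. s t \<in> Psi (y t) \<and> y (Suc t) = closest_point Xi (y t - \<alpha> *\<^sub>R s t)"
    using traj unfolding is_traj_def by blast
  have "V (y 0) - real t * \<alpha> * \<kappa> \<le> V (y 0)" using a k by simp
  hence VL: "V (y t) \<le> L" using Suc y0 cL by linarith
  have "V (y (Suc t)) \<le> max c (V (y t) - \<alpha> * \<kappa>)"
    using stp Suc s VL by auto
  also have "\<dots> \<le> max c (V (y 0) - real (Suc t) * \<alpha> * \<kappa>)"
  proof -
    have h: "real (Suc t) * \<alpha> * \<kappa> = real t * \<alpha> * \<kappa> + \<alpha> * \<kappa>" by (simp add: algebra_simps)
    have "\<alpha> * \<kappa> > 0" using a k by simp
    then show ?thesis using Suc h unfolding max_def by (smt (verit))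
  qed
  finally show ?case using s inXi by auto
qed

lemma spas_generic:
  fixes A Xi :: "'a::euclidean_space set" and V :: "'a \<Rightarrow> real" and Psi :: "'a \<Rightarrow> 'a set"
  assumes A_ne: "A \<noteq> {}" and Xi_cl: "closed Xi" and inXi: "\<forall>z. closest_point Xi z \<in> Xi"
    and spsp: "SPSP Psi V A Xi"
    and bdd: "\<forall>\<sigma>>0. \<exists>B>0. \<forall>y\<in>Xi \<inter> cballS \<sigma> A. \<forall>s\<in>Psi y. norm s \<le> B"
    and G4: "\<forall>R \<theta>. \<theta> > 0 \<longrightarrow> (\<exists>\<eta>>0. \<forall>y\<in>Xi \<inter> cballS R A. \<forall>\<alpha> s. 0 < \<alpha> \<longrightarrow> \<alpha> * norm s \<le> \<eta> \<longrightarrow>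
              V (closest_point Xi (y - \<alpha> *\<^sub>R s)) \<le> V y - \<alpha> * dV V y s + \<theta> * (\<alpha> * norm s))"
  shows "SPAS Xi Psi A"
proof -
  have diff: "\<forall>y. V differentiable (at y)" and Vnn: "\<forall>y. V y \<ge> 0" and rad: "rad_unb_on V A UNIV"
    and A_cpt: "compact A"
    using spsp unfolding SPSP_def by auto
  obtain \<epsilon> b where eps: "\<epsilon> \<ge> 0" and b0: "b \<ge> 0"
    and bc: "\<forall>y\<in>Xi \<inter> cballS \<epsilon> A. \<forall>s\<in>Psi y. dV V y s \<ge> - b"
    and phi0: "\<forall>\<sigma>>\<epsilon>. \<exists>\<phi>::'a \<Rightarrow> real. continuous_on UNIV \<phi> \<and>
            (\<forall>y\<in>Xi \<inter> (cballS \<sigma> A - ballS \<epsilon> A). \<phi> y > 0) \<and>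
            rad_unb_on \<phi> A Xi \<and>
            (\<forall>y\<in>Xi \<inter> (cballS \<sigma> A - ballS \<epsilon> A). \<forall>s\<in>Psi y. dV V y s \<ge> \<phi> y)"
    using spsp unfolding SPSP_def by blast
  have phi: "\<forall>\<sigma>>\<epsilon>. \<exists>\<phi>::'a \<Rightarrow> real. continuous_on UNIV \<phi> \<and>
            (\<forall>y\<in>Xi \<inter> (cballS \<sigma> A - ballS \<epsilon> A). \<phi> y > 0) \<and>
            (\<forall>y\<in>Xi \<inter> (cballS \<sigma> A - ballS \<epsilon> A). \<forall>s\<in>Psi y. dV V y s \<ge> \<phi> y)"
    using phi0 by meson
  have Vc: "continuous_on UNIV V"
    using diff by (meson continuous_at_imp_continuous_on differentiable_imp_continuous_within)
  have Vbd: "\<exists>M. \<forall>x\<in>cballS r A. V x \<le> M" if "r > 0" for r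
  proof -
    have "compact (V ` cballS r A)"
      using compact_continuous_image[OF continuous_on_subset[OF Vc] cballS_compact[OF A_ne A_cpt that]] by blast
    then obtain a where "\<forall>x\<in>V ` cballS r A. \<bar>x\<bar> \<le> a"
      using compact_imp_bounded bounded_real by blast
    thus ?thesis by (meson abs_le_D1 imageI)
  qed
  obtain M where M1: "\<forall>x\<in>cballS (\<epsilon>+1) A. V x \<le> M" using Vbd eps by force
  have M: "\<forall>x\<in>cballS \<epsilon> A. V x \<le> M" using M1 cballS_mono[of \<epsilon> "\<epsilon>+1" A] by auto
  obtain a where "a \<in> A" using A_ne by blast
  hence M0: "M \<ge> 0" using M1 sub_cballS[of "\<epsilon>+1" A] eps Vnn by (meson order_trans subsetD add_nonneg_nonneg zero_le_one)
  obtain r0 where r0: "r0 > 0" "\<forall>x. x \<notin> cballS r0 A \<longrightarrow> V x > M + 1/2"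
    using rad unfolding rad_unb_on_def by blast
  have sub: "x \<in> cballS r0 A" if "V x \<le> M + 1/2" for x using r0 that by force
  note step = step_lemma[OF A_ne A_cpt Xi_cl eps bc b0 phi M rad bdd G4]
  have PS: "practically_stable Xi Psi A"
    unfolding practically_stable_def
  proof (rule exI[of _ r0], intro conjI allI impI r0(1))
    fix \<rho>s assume \<rho>s: "\<rho>s > r0"
    obtain \<alpha>0 \<kappa> where a0: "\<alpha>0 > 0" "\<kappa> > 0" and st: "\<forall>\<alpha> y s. 0 < \<alpha> \<longrightarrow> \<alpha> \<le> \<alpha>0 \<longrightarrow> y \<in> Xi \<longrightarrow> s \<in> Psi y \<longrightarrow> V y \<le> M + 1/2 \<longrightarrow>
           V (closest_point Xi (y - \<alpha> *\<^sub>R s)) \<le> max (M + 1/2) (V y - \<alpha> * \<kappa>)"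
      using step[of "M + 1/2"] by blast
    have "\<forall>\<alpha>\<in>{\<alpha>0}. \<forall>y. is_traj Xi Psi \<alpha> y \<and> y 0 \<in> cballS (\<epsilon>+1) A \<inter> Xi \<longrightarrow>
            (\<forall>t. y t \<in> cballS \<rho>s A \<inter> Xi)"
    proof (intro ballI allI impI)
      fix \<alpha> y t assume \<alpha>: "\<alpha> \<in> {\<alpha>0}" and tr: "is_traj Xi Psi \<alpha> y \<and> y 0 \<in> cballS (\<epsilon>+1) A \<inter> Xi"
      have y0: "V (y 0) \<le> M + 1/2" using tr M1 by fastforce
      have "y t \<in> Xi \<and> V (y t) \<le> max (M + 1/2) (V (y 0) - real t * \<alpha> * \<kappa>)"
        apply (rule traj_lemma[where L="M+1/2"])
        using tr st \<alpha> a0 y0 inXi by auto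
      moreover have "V (y 0) - real t * \<alpha> * \<kappa> \<le> V (y 0)" using \<alpha> a0 by simp
      ultimately have "y t \<in> Xi" "V (y t) \<le> M + 1/2" using y0 by auto
      thus "y t \<in> cballS \<rho>s A \<inter> Xi" using sub cballS_mono[of r0 \<rho>s A] \<rho>s by auto
    qed
    thus "\<exists>\<delta>>0. \<exists>Ps. Ps \<noteq> {} \<and> Ps \<subseteq> {0<..} \<and>
        (\<forall>\<alpha>\<in>Ps. \<forall>y. is_traj Xi Psi \<alpha> y \<and> y 0 \<in> cballS \<delta> A \<inter> Xi \<longrightarrow>
            (\<forall>t. y t \<in> cballS \<rho>s A \<inter> Xi))"
      using a0 eps by (intro exI[of _ "\<epsilon>+1"] conjI exI[of _ "{\<alpha>0}"]) auto
  qed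
  have PA: "semiglobally_practically_attractive Xi Psi A"
    unfolding semiglobally_practically_attractive_def
  proof (rule exI[of _ r0], intro conjI allI impI r0(1))
    fix \<sigma> \<rho>a assume sr: "\<sigma> > \<rho>a \<and> \<rho>a > r0"
    obtain L\<sigma> where Ls: "\<forall>x\<in>cballS \<sigma> A. V x \<le> L\<sigma>" using Vbd sr r0 by force
    define L where "L = max (M + 1/2) L\<sigma>"
    obtain \<alpha>0 \<kappa> where a0: "\<alpha>0 > 0" "\<kappa> > 0" and st: "\<forall>\<alpha> y s. 0 < \<alpha> \<longrightarrow> \<alpha> \<le> \<alpha>0 \<longrightarrow> y \<in> Xi \<longrightarrow> s \<in> Psi y \<longrightarrow> V y \<le> L \<longrightarrow>
           V (closest_point Xi (y - \<alpha> *\<^sub>R s)) \<le> max (M + 1/2) (V y - \<alpha> * \<kappa>)"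
      using step[of L] by blast
    have "unif_attractive Xi Psi \<alpha>0 (cballS \<rho>a A) (cballS \<sigma> A)"
      unfolding unif_attractive_def
    proof (intro allI impI)
      fix e :: real assume e0: "e > 0" and "cballS e (cballS \<rho>a A) \<inter> Xi \<subseteq> cballS \<sigma> A \<inter> Xi"
      define T where "T = nat \<lceil>L / (\<alpha>0 * \<kappa>)\<rceil>"
      have TL: "real T * \<alpha>0 * \<kappa> \<ge> L"
      proof -
        have "real T \<ge> L / (\<alpha>0 * \<kappa>)" unfolding T_def by linarith
        hence "real T * (\<alpha>0 * \<kappa>) \<ge> L" using a0 by (simp add: field_simps)
        thus ?thesis by (simp add: mult.assoc)
      qed
      show "\<exists>T::nat. \<forall>y. is_traj Xi Psi \<alpha>0 y \<and> y 0 \<in> cballS \<sigma> A \<longrightarrow> (\<forall>t\<ge>T. y t \<in> cballS e (cballS \<rho>a A))"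
      proof (intro exI[of _ T] allI impI)
        fix y t assume tr: "is_traj Xi Psi \<alpha>0 y \<and> y 0 \<in> cballS \<sigma> A" and tT: "T \<le> t"
        have y0: "V (y 0) \<le> L" using tr Ls unfolding L_def by fastforce
        have "y t \<in> Xi \<and> V (y t) \<le> max (M + 1/2) (V (y 0) - real t * \<alpha>0 * \<kappa>)"
          apply (rule traj_lemma[where L=L])
          using tr st a0 y0 inXi unfolding L_def by auto
        moreover have "real t * \<alpha>0 * \<kappa> \<ge> real T * \<alpha>0 * \<kappa>"
          using tT a0 by (intro mult_right_mono) auto
        ultimately have "V (y t) \<le> M + 1/2" using TL y0 M0 by auto
        hence "y t \<in> cballS \<rho>a A" using sub cballS_mono[of r0 \<rho>a A] sr by auto
        thus "y t \<in> cballS e (cballS \<rho>a A)" unfolding cballS_def[of e] using e0 by simp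
      qed
    qed
    thus "\<exists>Pa. Pa \<noteq> {} \<and> Pa \<subseteq> {0<..} \<and> (\<forall>\<alpha>\<in>Pa. unif_attractive Xi Psi \<alpha> (cballS \<rho>a A) (cballS \<sigma> A))"
      using a0 by (intro exI[of _ "{\<alpha>0}"]) auto
  qed
  show ?thesis unfolding SPAS_def using PS PA by blast
qed


lemma deriv_upper:
  fixes V :: "'a::real_normed_vector \<Rightarrow> real"
  assumes dV: "(V has_derivative D) (at y)"
    and up: "\<forall>t>0. V (y + t *\<^sub>R s) \<le> V y + t * c + t\<^sup>2 * k"
  shows "D s \<le> c"
proof -
  have lin: "linear D" using dV has_derivative_linear by blast
  have "((\<lambda>t. y + t *\<^sub>R s) has_derivative (\<lambda>t. t *\<^sub>R s)) (at 0)"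
    by (auto intro!: derivative_eq_intros)
  from has_derivative_compose[OF this] dV
  have "((\<lambda>t. V (y + t *\<^sub>R s)) has_derivative (\<lambda>t. D (t *\<^sub>R s))) (at 0)" by simp
  moreover have "(\<lambda>t. D (t *\<^sub>R s)) = (\<lambda>t. D s * t)"
    using lin by (auto simp: linear_scale mult.commute)
  ultimately have "((\<lambda>t. V (y + t *\<^sub>R s)) has_field_derivative D s) (at 0)"
    by (simp add: has_field_derivative_def)
  hence "((\<lambda>h. (V (y + (0 + h) *\<^sub>R s) - V (y + 0 *\<^sub>R s)) / h) \<longlongrightarrow> D s) (at 0)"
    using DERIV_def[where f="\<lambda>t. V (y + t *\<^sub>R s)" and x=0 and D="D s"] by simp
  hence lim1: "((\<lambda>h. (V (y + h *\<^sub>R s) - V y) / h) \<longlongrightarrow> D s) (at_right 0)"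
    by (simp add: filterlim_at_split)
  have lim2: "((\<lambda>h. c + h * k) \<longlongrightarrow> c) (at_right (0::real))"
    by (auto intro!: tendsto_eq_intros)
  have ev: "eventually (\<lambda>h. (V (y + h *\<^sub>R s) - V y) / h \<le> c + h * k) (at_right 0)"
    unfolding eventually_at_right_field
  proof (intro exI[of _ 1] conjI allI impI)
    fix h :: real assume h: "0 < h" and "h < 1"
    have "V (y + h *\<^sub>R s) - V y \<le> h * (c + h * k)" using up[rule_format, OF h] by (simp add: power2_eq_square algebra_simps)
    thus "(V (y + h *\<^sub>R s) - V y) / h \<le> c + h * k" using h by (simp add: divide_le_eq mult.commute)
  qed simp
  show ?thesis using tendsto_le[OF trivial_limit_at_right_real lim2 lim1 ev] .
qed

lemma norm_diff_sq:
  fixes g h :: "'a::real_inner"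
  shows "(norm (g - h))\<^sup>2 = (norm g)\<^sup>2 - 2 * (g \<bullet> h) + (norm h)\<^sup>2"
  by (simp add: power2_norm_eq_inner inner_diff_left inner_diff_right inner_commute)

lemma norm_add_sq:
  fixes g h :: "'a::real_inner"
  shows "(norm (g + h))\<^sup>2 = (norm g)\<^sup>2 + 2 * (g \<bullet> h) + (norm h)\<^sup>2"
  by (simp add: power2_norm_eq_inner inner_add_left inner_add_right inner_commute)

lemma G4_i:
  fixes A Xi :: "'a::euclidean_space set" and V :: "'a \<Rightarrow> real"
  assumes Xi: "Xi \<noteq> {}" "closed Xi" "convex Xi" and A: "A \<noteq> {}" "compact A" and AXi: "A \<subseteq> Xi"
    and Vdef: "\<forall>y. V y = (1/2) * (norm (y - closest_point A y))\<^sup>2"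
    and diff: "\<forall>y. V differentiable (at y)"
  shows "\<forall>R \<theta>. \<theta> > 0 \<longrightarrow> (\<exists>\<eta>>0. \<forall>y\<in>Xi \<inter> cballS R A. \<forall>\<alpha> s. 0 < \<alpha> \<longrightarrow> \<alpha> * norm s \<le> \<eta> \<longrightarrow>
              V (closest_point Xi (y - \<alpha> *\<^sub>R s)) \<le> V y - \<alpha> * dV V y s + \<theta> * (\<alpha> * norm s))"
proof (intro allI impI)
  fix R \<theta> :: real assume th: "\<theta> > 0"
  have Acl: "closed A" using A compact_imp_closed by blast
  have Vle: "V z \<le> (1/2) * (norm (z - a))\<^sup>2" if "a \<in> A" for z a
  proof -
    have "norm (z - closest_point A z) \<le> norm (z - a)"
      using closest_point_le[OF Acl that, of z] by (simp add: dist_norm)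
    hence "(norm (z - closest_point A z))\<^sup>2 \<le> (norm (z - a))\<^sup>2"
      by (simp add: power_mono)
    thus ?thesis using Vdef by simp
  qed
  have Vproj: "V (closest_point Xi z) \<le> V z" for z
  proof -
    define a where "a = closest_point A z"
    have aA: "a \<in> A" unfolding a_def using closest_point_in_set[OF Acl A(1)] .
    have "closest_point Xi a = a" using closest_point_self AXi aA by blast
    hence "norm (closest_point Xi z - a) \<le> norm (z - a)"
      using closest_point_lipschitz[OF Xi(3) Xi(2) Xi(1), of z a] by (simp add: dist_norm)
    hence "(norm (closest_point Xi z - a))\<^sup>2 \<le> (norm (z - a))\<^sup>2"
      by (simp add: power_mono)
    moreover have "V z = (1/2) * (norm (z - a))\<^sup>2" using Vdef unfolding a_def by simp
    moreover have "V (closest_point Xi z) \<le> (1/2) * (norm (closest_point Xi z - a))\<^sup>2"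
      using Vle[OF aA] by blast
    ultimately show ?thesis by linarith
  qed
  show "\<exists>\<eta>>0. \<forall>y\<in>Xi \<inter> cballS R A. \<forall>\<alpha> s. 0 < \<alpha> \<longrightarrow> \<alpha> * norm s \<le> \<eta> \<longrightarrow>
              V (closest_point Xi (y - \<alpha> *\<^sub>R s)) \<le> V y - \<alpha> * dV V y s + \<theta> * (\<alpha> * norm s)"
  proof (intro exI[of _ "2*\<theta>"] conjI ballI allI impI)
    show "2 * \<theta> > 0" using th by simp
    fix y s :: 'a and \<alpha> :: real assume a: "0 < \<alpha>" and an: "\<alpha> * norm s \<le> 2 * \<theta>"
    define p where "p = closest_point A y"
    define g where "g = y - p"
    have pA: "p \<in> A" unfolding p_def using closest_point_in_set[OF Acl A(1)] .
    have Vy: "V y = (1/2) * (norm g)\<^sup>2" using Vdef unfolding g_def p_def by simp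
    have D: "dV V y s \<le> g \<bullet> s"
    proof -
      have hd: "(V has_derivative frechet_derivative V (at y)) (at y)"
        using diff frechet_derivative_works by blast
      have "\<forall>t>0. V (y + t *\<^sub>R s) \<le> V y + t * (g \<bullet> s) + t\<^sup>2 * ((norm s)\<^sup>2 / 2)"
      proof (intro allI impI)
        fix t :: real assume "t > 0"
        have "V (y + t *\<^sub>R s) \<le> (1/2) * (norm (g + t *\<^sub>R s))\<^sup>2"
          using Vle[OF pA, of "y + t *\<^sub>R s"] unfolding g_def by (simp add: algebra_simps)
        also have "\<dots> = V y + t * (g \<bullet> s) + t\<^sup>2 * ((norm s)\<^sup>2 / 2)"
          unfolding norm_add_sq Vy by (simp add: power_mult_distrib algebra_simps)
        finally show "V (y + t *\<^sub>R s) \<le> V y + t * (g \<bullet> s) + t\<^sup>2 * ((norm s)\<^sup>2 / 2)" .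
      qed
      from deriv_upper[OF hd this] show ?thesis unfolding dV_def .
    qed
    have "V (closest_point Xi (y - \<alpha> *\<^sub>R s)) \<le> V (y - \<alpha> *\<^sub>R s)" by (rule Vproj)
    also have "\<dots> \<le> (1/2) * (norm (g - \<alpha> *\<^sub>R s))\<^sup>2"
      using Vle[OF pA, of "y - \<alpha> *\<^sub>R s"] unfolding g_def by (simp add: algebra_simps)
    also have "\<dots> = V y - \<alpha> * (g \<bullet> s) + (1/2) * (\<alpha> * norm s)\<^sup>2"
      unfolding norm_diff_sq Vy by (simp add: power_mult_distrib algebra_simps)
    also have "\<dots> \<le> V y - \<alpha> * dV V y s + \<theta> * (\<alpha> * norm s)"
    proof -
      have "\<alpha> * dV V y s \<le> \<alpha> * (g \<bullet> s)" using D a by (intro mult_left_mono) auto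
      moreover have "(1/2) * (\<alpha> * norm s)\<^sup>2 \<le> \<theta> * (\<alpha> * norm s)"
      proof -
        have "(\<alpha> * norm s) * (\<alpha> * norm s) \<le> (2 * \<theta>) * (\<alpha> * norm s)"
          using an a by (intro mult_right_mono) auto
        thus ?thesis by (simp add: power2_eq_square)
      qed
      ultimately show ?thesis by linarith
    qed
    finally show "V (closest_point Xi (y - \<alpha> *\<^sub>R s)) \<le> V y - \<alpha> * dV V y s + \<theta> * (\<alpha> * norm s)" .
  qed
qed

lemma G4_ii:
  fixes A :: "'a::euclidean_space set" and V :: "'a \<Rightarrow> real" and g :: "'a \<Rightarrow> 'a"
  assumes A: "A \<noteq> {}" "compact A"
    and gd: "\<forall>y. (V has_derivative (\<lambda>h. g y \<bullet> h)) (at y)" and gc: "continuous_on UNIV g"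
  shows "\<forall>R \<theta>. \<theta> > 0 \<longrightarrow> (\<exists>\<eta>>0. \<forall>y\<in>UNIV \<inter> cballS R A. \<forall>\<alpha> s. 0 < \<alpha> \<longrightarrow> \<alpha> * norm s \<le> \<eta> \<longrightarrow>
              V (closest_point UNIV (y - \<alpha> *\<^sub>R s)) \<le> V y - \<alpha> * dV V y s + \<theta> * (\<alpha> * norm s))"
proof (intro allI impI)
  fix R \<theta> :: real assume th: "\<theta> > 0"
  define K where "K = cballS (max R 0 + 1) A"
  have Kc: "compact K" unfolding K_def by (rule cballS_compact[OF A]) auto
  have "uniformly_continuous_on K g" using compact_uniformly_continuous[OF continuous_on_subset[OF gc] Kc] by simp
  then obtain d where d: "d > 0" "\<forall>x\<in>K. \<forall>x'\<in>K. dist x' x < d \<longrightarrow> dist (g x') (g x) < \<theta>"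
    unfolding uniformly_continuous_on_def using th by metis
  define \<eta> where "\<eta> = min 1 (d/2)"
  have eta: "\<eta> > 0" "\<eta> \<le> 1" "\<eta> < d" using d unfolding \<eta>_def by auto
  show "\<exists>\<eta>>0. \<forall>y\<in>UNIV \<inter> cballS R A. \<forall>\<alpha> s. 0 < \<alpha> \<longrightarrow> \<alpha> * norm s \<le> \<eta> \<longrightarrow>
              V (closest_point UNIV (y - \<alpha> *\<^sub>R s)) \<le> V y - \<alpha> * dV V y s + \<theta> * (\<alpha> * norm s)"
  proof (intro exI[of _ \<eta>] conjI ballI allI impI eta(1))
    fix y s :: 'a and \<alpha> :: real assume yR: "y \<in> UNIV \<inter> cballS R A" and a: "0 < \<alpha>" and an: "\<alpha> * norm s \<le> \<eta>"
    define h where "h = \<alpha> *\<^sub>R s"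
    have nh: "norm h = \<alpha> * norm s" unfolding h_def using a by simp
    have dVy: "dV V y s = g y \<bullet> s"
      unfolding dV_def using frechet_derivative_at[OF gd[rule_format, of y]] by metis
    define f where "f = (\<lambda>t::real. V (y - t *\<^sub>R h))"
    have fd: "(f has_field_derivative (- (g (y - t *\<^sub>R h) \<bullet> h))) (at t)" for t
    proof -
      have "((\<lambda>t. y - t *\<^sub>R h) has_derivative (\<lambda>t. - (t *\<^sub>R h))) (at t)"
        by (auto intro!: derivative_eq_intros)
      from has_derivative_compose[OF this gd[rule_format, of "y - t *\<^sub>R h"]]
      have "(f has_derivative (\<lambda>u. g (y - t *\<^sub>R h) \<bullet> (- (u *\<^sub>R h)))) (at t)"
        unfolding f_def by simp
      moreover have "(\<lambda>u. g (y - t *\<^sub>R h) \<bullet> (- (u *\<^sub>R h))) = (*) (- (g (y - t *\<^sub>R h) \<bullet> h))"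
        by (rule ext) (simp add: inner_scaleR_right)
      ultimately show ?thesis unfolding has_field_derivative_def by simp
    qed
    obtain \<xi> where xi: "0 < \<xi>" "\<xi> < 1" "f 1 - f 0 = (1 - 0) * (- (g (y - \<xi> *\<^sub>R h) \<bullet> h))"
      using MVT2[of 0 1 f "\<lambda>t. - (g (y - t *\<^sub>R h) \<bullet> h)"] fd by auto
    have yK: "y \<in> K" using yR unfolding K_def cballS_def by auto
    have dxy: "dist (y - \<xi> *\<^sub>R h) y = \<xi> * norm h" using xi by (simp add: dist_norm)
    have "\<xi> * norm h \<le> norm h" using xi mult_right_mono[of \<xi> 1 "norm h"] by simp
    hence dxy2: "dist (y - \<xi> *\<^sub>R h) y \<le> \<eta>" using dxy an nh by linarith
    have "infdist (y - \<xi> *\<^sub>R h) A \<le> infdist y A + dist (y - \<xi> *\<^sub>R h) y" by (rule infdist_triangle)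
    hence zK: "y - \<xi> *\<^sub>R h \<in> K" using yR dxy2 eta unfolding K_def cballS_def by auto
    have gdist: "norm (g y - g (y - \<xi> *\<^sub>R h)) < \<theta>"
      using d(2) yK zK dxy2 eta by (metis dist_norm dist_commute le_less_trans)
    have "f 1 - f 0 = - (g y \<bullet> h) + (g y - g (y - \<xi> *\<^sub>R h)) \<bullet> h"
      using xi(3) by (simp add: inner_diff_left)
    also have "\<dots> \<le> - (g y \<bullet> h) + norm (g y - g (y - \<xi> *\<^sub>R h)) * norm h"
      using norm_cauchy_schwarz by simp
    also have "\<dots> \<le> - (g y \<bullet> h) + \<theta> * norm h"
      using gdist by (simp add: mult_right_mono)
    finally have "V (y - h) \<le> V y - g y \<bullet> h + \<theta> * norm h" unfolding f_def by simp
    thus "V (closest_point UNIV (y - \<alpha> *\<^sub>R s)) \<le> V y - \<alpha> * dV V y s + \<theta> * (\<alpha> * norm s)"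
      using closest_point_self[of "y - h" UNIV] nh dVy a unfolding h_def by simp
  qed
qed


theorem theorem2:
  fixes A Xi :: "'a::euclidean_space set"
    and V :: "'a \<Rightarrow> real"
    and Psi :: "'a \<Rightarrow> 'a set"
  assumes A_ne: "A \<noteq> {}" and A_cpt: "compact A"
    and V_nonneg: "\<forall>y. V y \<ge> 0"
    and settings:
      "(Xi \<noteq> {} \<and> closed Xi \<and> convex Xi \<and> convex A \<and>
          (\<forall>y. V y = (1/2) * (norm (y - closest_point A y))\<^sup>2))
       \<or> (Xi = UNIV \<and>
          (\<exists>g::'a \<Rightarrow> 'a. (\<forall>y. (V has_derivative (\<lambda>h. g y \<bullet> h)) (at y)) \<and> continuous_on UNIV g \<and>
              (\<forall>x. \<exists>e>0. \<exists>L. lipschitz_on L (ball x e) g)) \<and>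
          pos_def_wrt V A \<and> rad_unb_on V A UNIV)"
    and spsp: "SPSP Psi V A Xi"
    and bdd: "\<forall>\<sigma>>0. \<exists>B>0. \<forall>y\<in>Xi \<inter> cballS \<sigma> A. \<forall>s\<in>Psi y. norm s \<le> B"
  shows "SPAS Xi Psi A"
proof -
  have Asub: "A \<subseteq> Xi"
    using spsp unfolding SPSP_def strictly_contains_def
    by (metis centre_in_ball subsetD subsetI)
  have diff: "\<forall>y. V differentiable (at y)" using spsp unfolding SPSP_def by blast
  from settings show ?thesis
  proof
    assume H: "Xi \<noteq> {} \<and> closed Xi \<and> convex Xi \<and> convex A \<and>
          (\<forall>y. V y = (1/2) * (norm (y - closest_point A y))\<^sup>2)"
    have inXi: "\<forall>z. closest_point Xi z \<in> Xi" using H closest_point_in_set by blast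
    show ?thesis
      using spas_generic[OF A_ne _ inXi spsp bdd G4_i[OF _ _ _ A_ne A_cpt Asub _ diff]] H by blast
  next
    assume H: "Xi = UNIV \<and>
          (\<exists>g::'a \<Rightarrow> 'a. (\<forall>y. (V has_derivative (\<lambda>h. g y \<bullet> h)) (at y)) \<and> continuous_on UNIV g \<and>
              (\<forall>x. \<exists>e>0. \<exists>L. lipschitz_on L (ball x e) g)) \<and>
          pos_def_wrt V A \<and> rad_unb_on V A UNIV"
    then obtain g :: "'a \<Rightarrow> 'a" where g: "\<forall>y. (V has_derivative (\<lambda>h. g y \<bullet> h)) (at y)" "continuous_on UNIV g"
      by blast
    have XU: "Xi = UNIV" using H by blast
    show ?thesis
      using spas_generic[of A Xi, OF A_ne _ _ spsp bdd] G4_ii[OF A_ne A_cpt g] XU by simp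
  qed
qed

end
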